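(* Let $(\mathbb X,d)$ be a proper complete metric space and let $F_t=\{f_{(1,t)},\dots,f_{(N,t)}\}$, $t\in[0,1]$, be a one-parameter family satisfying (H2), such that for each $i$ the map $[0,1]\ni t\mapsto f_{(i,t)}$ is continuous with respect to the topology of uniform convergence on $\mathbb X$ (i.e. $\sup_{x\in\mathbb X}d(f_{(i,s)}(x),f_{(i,t)}(x))\to0$ as $s\to t$). Then $F_t$ admits at least one upper transition attractor.
   Context: A metric space is proper if closed bounded sets are compact. A one-parameter family is $F_t=\{f_{(1,t)},\dots,f_{(N,t)}\}$, $t\in[0,1]$, $N\ge2$, of continuous self-maps of $\mathbb X$; $\mathrm{Lip}(F_t,d)=\max_i\sup_{x\ne y}d(f_{(i,t)}(x),f_{(i,t)}(y))/d(x,y)$. (H2): $\mathrm{Lip}(F_t,d)<1$ for all $t\in[0,1)$. For $t\in[0,1)$, $A_t$ denotes the attractor of $F_t$, i.e. the unique nonempty compact set with $A_t=\bigcup_i f_{(i,t)}(A_t)$. With $h$ the Hausdorff metric on nonempty compact sets, an upper transition attractor of $F_t$ is a compact set $A^\bullet$ for which there is an increasing sequence $t_n\in[0,1)$, $t_n\to1$, with $h(A_{t_n},A^\bullet)\to0$. *)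

theory Defs
  imports "HOL-Analysis.Analysis"
begin

definition hausdorff_dist :: "'a::metric_space set \<Rightarrow> 'a set \<Rightarrow> real" where
  "hausdorff_dist A B = max (SUP a\<in>A. infdist a B) (SUP b\<in>B. infdist b A)"

definition is_attractor :: "nat \<Rightarrow> (nat \<Rightarrow> 'a::metric_space \<Rightarrow> 'a) \<Rightarrow> 'a set \<Rightarrow> bool" where
  "is_attractor N g A \<longleftrightarrow> A \<noteq> {} \<and> compact A \<and> A = (\<Union>i\<in>{1..N}. g i ` A)"

text \<open>The attractor A_t of F_t (unique under (H2)).\<close>
definition attractor :: "nat \<Rightarrow> (nat \<Rightarrow> 'a::metric_space \<Rightarrow> 'a) \<Rightarrow> 'a set" where
  "attractor N g = (THE A. is_attractor N g A)"

definition upper_transition_attractor ::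
  "nat \<Rightarrow> (nat \<Rightarrow> real \<Rightarrow> 'a::metric_space \<Rightarrow> 'a) \<Rightarrow> 'a set \<Rightarrow> bool" where
  "upper_transition_attractor N f B \<longleftrightarrow> B \<noteq> {} \<and> compact B \<and>
     (\<exists>tn :: nat \<Rightarrow> real. strict_mono tn \<and> (\<forall>n. tn n \<in> {0..<1}) \<and> tn \<longlonglongrightarrow> 1 \<and>
        (\<lambda>n. hausdorff_dist (attractor N (\<lambda>i. f i (tn n))) B) \<longlonglongrightarrow> 0)"

end

theory Submission
  imports Defs "HOL-Complex_Analysis.Great_Picard"
begin


lemma nested_compact_nonempty:
  fixes E :: "nat \<Rightarrow> 'a::metric_space set"
  assumes cl: "\<And>n. closed (E n)" and ne: "\<And>n. E n \<noteq> {}"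
    and dec: "\<And>n. E (Suc n) \<subseteq> E n" and c0: "compact (E 0)"
  shows "\<Inter>(range E) \<noteq> {}"
proof -
  have anti: "m \<le> n \<Longrightarrow> E n \<subseteq> E m" for m n
    by (rule lift_Suc_antimono_le[of E]) (use dec in auto)
  have "E 0 \<inter> \<Inter>(range E) \<noteq> {}"
  proof (rule compact_imp_fip[OF c0])
    show "\<And>T. T \<in> range E \<Longrightarrow> closed T" using cl by auto
    fix F' assume fin: "finite F'" and sub: "F' \<subseteq> range E"
    then obtain I where I: "finite I" "F' = E ` I"
      by (meson finite_subset_image)
    define M where "M = (if I = {} then 0 else Max I)"
    have "E M \<subseteq> E 0 \<inter> \<Inter>F'"
    proof -
      have "i \<in> I \<Longrightarrow> E M \<subseteq> E i" for i
        using I anti Max_ge unfolding M_def by (metis empty_iff)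
      then show ?thesis using I anti by auto
    qed
    then show "E 0 \<inter> \<Inter>F' \<noteq> {}" using ne by blast
  qed
  then show ?thesis by blast
qed

lemma nearest_point:
  fixes A :: "'a::metric_space set"
  assumes "compact A" "A \<noteq> {}"
  obtains b where "b \<in> A" "dist x b = infdist x A"
proof -
  obtain b where b: "b \<in> A" "\<forall>y\<in>A. dist x b \<le> dist x y"
    using continuous_attains_inf[OF assms, of "\<lambda>y. dist x y"]
      continuous_on_dist[OF continuous_on_const continuous_on_id, of A x] by auto
  have "infdist x A \<le> dist x b" using b infdist_le by blast
  moreover have "dist x b \<le> infdist x A"
    unfolding infdist_notempty[OF assms(2)] using b assms(2) by (auto intro: cINF_greatest)
  ultimately show ?thesis using that b by force
qed

lemma attractor_subset:
  fixes g :: "nat \<Rightarrow> 'a::metric_space \<Rightarrow> 'a"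
  assumes A: "is_attractor N g A" and A': "is_attractor N g A'"
    and L: "L < 1" "\<forall>i\<in>{1..N}. \<forall>x y. dist (g i x) (g i y) \<le> L * dist x y"
  shows "A \<subseteq> A'"
proof -
  have cA: "compact A" "A \<noteq> {}" "A = (\<Union>i\<in>{1..N}. g i ` A)"
    and cA': "compact A'" "A' \<noteq> {}" "A' = (\<Union>i\<in>{1..N}. g i ` A')"
    using A A' unfolding is_attractor_def by auto
  obtain a0 where a0: "a0 \<in> A" "\<forall>y\<in>A. infdist y A' \<le> infdist a0 A'"
    using continuous_attains_sup[OF cA(1,2), of "\<lambda>y. infdist y A'"]
      continuous_on_infdist[OF continuous_on_id, of A A'] by auto
  obtain i b where ib: "i \<in> {1..N}" "b \<in> A" "a0 = g i b"
    using a0(1) cA(3) by blast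
  obtain b' where b': "b' \<in> A'" "dist b b' = infdist b A'"
    using nearest_point[OF cA'(1,2)] by blast
  have gb': "g i b' \<in> A'" using cA'(3) ib(1) b'(1) by blast
  have "infdist a0 A' \<le> dist a0 (g i b')" using gb' infdist_le by blast
  also have "\<dots> \<le> L * dist b b'" using L(2) ib by auto
  also have "\<dots> = L * infdist b A'" using b' by simp
  finally have ineq: "infdist a0 A' \<le> L * infdist b A'" .
  have "infdist b A' \<le> infdist a0 A'" using a0 ib by auto
  have z: "infdist a0 A' = 0"
  proof (rule ccontr)
    assume "infdist a0 A' \<noteq> 0"
    then have pos: "infdist a0 A' > 0" using infdist_nonneg[of a0 A'] by linarith
    have "L * infdist b A' \<le> L * infdist a0 A' \<or> L < 0"
      using \<open>infdist b A' \<le> infdist a0 A'\<close> by (meson mult_left_mono not_le)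
    then show False
    proof
      assume "L * infdist b A' \<le> L * infdist a0 A'"
      then have "infdist a0 A' \<le> L * infdist a0 A'" using ineq by linarith
      then show False using pos L(1) by (smt (verit) mult_le_cancel_right1)
    next
      assume "L < 0"
      then have "L * infdist b A' \<le> 0" using infdist_nonneg mult_nonpos_nonneg by (metis less_imp_le)
      then show False using ineq pos by linarith
    qed
  qed
  show ?thesis
  proof
    fix a assume "a \<in> A"
    then have "infdist a A' = 0" using a0 z infdist_nonneg[of a A'] by (metis order_antisym)
    then show "a \<in> A'" using in_closed_iff_infdist_zero[OF compact_imp_closed[OF cA'(1)] cA'(2)] by simp
  qed
qed

lemma attractor_exists:
  fixes g :: "nat \<Rightarrow> 'a::metric_space \<Rightarrow> 'a"
  assumes K: "compact K" "K \<noteq> {}" and N: "N \<ge> 1"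
    and inv: "\<And>i. i \<in> {1..N} \<Longrightarrow> g i ` K \<subseteq> K"
    and cont: "\<And>i. i \<in> {1..N} \<Longrightarrow> continuous_on UNIV (g i)"
    and L: "L < 1" "\<forall>i\<in>{1..N}. \<forall>x y. dist (g i x) (g i y) \<le> L * dist x y"
  shows "is_attractor N g (attractor N g) \<and> attractor N g \<subseteq> K"
proof -
  define H where "H S = (\<Union>i\<in>{1..N}. g i ` S)" for S
  define E where "E n = (H ^^ n) K" for n
  have ES: "E (Suc n) = H (E n)" for n by (simp add: E_def)
  have E0: "E 0 = K" by (simp add: E_def)
  have Hmono: "S \<subseteq> T \<Longrightarrow> H S \<subseteq> H T" for S T unfolding H_def by blast
  have HK: "H K \<subseteq> K" using inv unfolding H_def by blast
  have dec: "E (Suc n) \<subseteq> E n" for n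
  proof (induction n)
    case 0 then show ?case using HK by (simp add: ES E0)
  next
    case (Suc n) then show ?case by (simp add: ES Hmono)
  qed
  have EK: "E n \<subseteq> K" for n
    by (induction n) (use dec in \<open>auto simp: E0\<close>)
  have Hc: "compact S \<Longrightarrow> compact (H S)" for S
    unfolding H_def using cont by (intro compact_UN) (auto intro: compact_continuous_image continuous_on_subset)
  have Hne: "S \<noteq> {} \<Longrightarrow> H S \<noteq> {}" for S
    unfolding H_def using N by auto
  have Ec: "compact (E n)" for n by (induction n) (auto simp: ES E0 K Hc)
  have Ene: "E n \<noteq> {}" for n by (induction n) (auto simp: ES E0 K Hne)
  define A where "A = \<Inter>(range E)"
  have Ane: "A \<noteq> {}" unfolding A_def
    by (rule nested_compact_nonempty) (auto simp: Ec Ene dec compact_imp_closed E0 K)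
  have Ac: "compact A"
  proof -
    have "closed A" unfolding A_def using Ec compact_imp_closed by (intro closed_INT) auto
    moreover have "A = A \<inter> E 0" unfolding A_def by blast
    ultimately show ?thesis using closed_Int_compact Ec by metis
  qed
  have sub1: "H A \<subseteq> A"
  proof -
    have "H A \<subseteq> E n" for n
    proof -
      have "A \<subseteq> E n" unfolding A_def by blast
      then have "H A \<subseteq> E (Suc n)" using Hmono ES by metis
      then show ?thesis using dec by blast
    qed
    then show ?thesis unfolding A_def by blast
  qed
  have sub2: "A \<subseteq> H A"
  proof
    fix x assume x: "x \<in> A"
    define G where "G = (\<Union>i\<in>{1..N}. g i -` {x})"
    have Gc: "closed G" unfolding G_def using cont by (intro closed_UN) (auto intro: closed_vimage)
    define F where "F n = E n \<inter> G" for n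
    have "\<Inter>(range F) \<noteq> {}"
    proof (rule nested_compact_nonempty)
      show "closed (F n)" for n unfolding F_def using Gc Ec compact_imp_closed by blast
      show "F (Suc n) \<subseteq> F n" for n unfolding F_def using dec by blast
      show "compact (F 0)" unfolding F_def using Gc Ec closed_Int_compact Int_commute by metis
      show "F n \<noteq> {}" for n
      proof -
        have "x \<in> E (Suc n)" using x unfolding A_def by blast
        then obtain i y where "i \<in> {1..N}" "y \<in> E n" "x = g i y" unfolding ES H_def by blast
        then have "y \<in> F n" unfolding F_def G_def by blast
        then show ?thesis by blast
      qed
    qed
    then obtain y where "y \<in> \<Inter>(range F)" by blast
    then have "y \<in> A" "y \<in> G" unfolding A_def F_def by auto
    then show "x \<in> H A" unfolding G_def H_def by force
  qed
  have isA: "is_attractor N g A"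
    unfolding is_attractor_def using Ane Ac sub1 sub2 unfolding H_def by blast
  have "attractor N g = A"
    unfolding attractor_def
  proof (rule the_equality)
    show "is_attractor N g A" by (rule isA)
    fix A' assume "is_attractor N g A'"
    then show "A' = A" using attractor_subset[OF _ _ L] isA by blast
  qed
  moreover have "A \<subseteq> K" unfolding A_def using E0 by blast
  ultimately show ?thesis using isA by simp
qed



lemma hausdorff_dist_le:
  fixes S T :: "'a::metric_space set"
  assumes "S \<noteq> {}" "T \<noteq> {}" "\<And>a. a \<in> S \<Longrightarrow> infdist a T \<le> e" "\<And>b. b \<in> T \<Longrightarrow> infdist b S \<le> e"
  shows "0 \<le> hausdorff_dist S T \<and> hausdorff_dist S T \<le> e"
proof -
  have b1: "bdd_above ((\<lambda>a. infdist a T) ` S)" using assms(3) by (intro bdd_aboveI[of _ e]) auto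
  have b2: "bdd_above ((\<lambda>a. infdist a S) ` T)" using assms(4) by (intro bdd_aboveI[of _ e]) auto
  have u1: "(SUP a\<in>S. infdist a T) \<le> e" using assms(1,3) by (intro cSUP_least) auto
  have u2: "(SUP a\<in>T. infdist a S) \<le> e" using assms(2,4) by (intro cSUP_least) auto
  obtain a where a: "a \<in> S" using assms(1) by blast
  have "infdist a T \<le> (SUP a\<in>S. infdist a T)" using cSUP_upper[OF a b1] .
  then have l1: "0 \<le> (SUP a\<in>S. infdist a T)" using infdist_nonneg[of a T] by linarith
  show ?thesis unfolding hausdorff_dist_def using u1 u2 l1 by auto
qed

lemma blaschke:
  fixes A :: "nat \<Rightarrow> 'a::metric_space set"
  assumes K: "compact K" and Ac: "\<And>n. compact (A n)" and Ane: "\<And>n. A n \<noteq> {}"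
    and AK: "\<And>n. A n \<subseteq> K"
  obtains r B where "strict_mono r" "B \<noteq> {}" "compact B"
    "(\<lambda>n. hausdorff_dist (A (r n)) B) \<longlonglongrightarrow> 0"
proof -
  have sK: "seq_compact K" using K compact_imp_seq_compact by blast
  have tb: "\<forall>e>0. \<exists>k. finite k \<and> k \<subseteq> K \<and> K \<subseteq> (\<Union>x\<in>k. ball x e)"
    using seq_compact_imp_totally_bounded[OF sK] .
  then have "\<forall>m::nat. \<exists>k. finite k \<and> k \<subseteq> K \<and> K \<subseteq> (\<Union>x\<in>k. ball x (1 / Suc m))"
    by simp
  then obtain Fm where Fm: "\<And>m. finite (Fm m)" "\<And>m. Fm m \<subseteq> K"
    "\<And>m. K \<subseteq> (\<Union>x\<in>Fm m. ball x (1 / Suc m))"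
    by metis
  define D where "D = (\<Union>m. Fm m)"
  have Dc: "countable D" unfolding D_def using Fm(1) by (auto intro: countable_finite)
  have DK: "D \<subseteq> K" unfolding D_def using Fm(2) by blast
  have netD: "\<exists>F. finite F \<and> F \<subseteq> D \<and> K \<subseteq> (\<Union>x\<in>F. ball x e)" if e0: "e > 0" for e
  proof -
    obtain m where m: "inverse (real (Suc m)) < e" using reals_Archimedean[OF e0] by blast
    have "ball x (1 / real (Suc m)) \<subseteq> ball x e" for x
      using m by (intro subset_ball) (simp add: divide_inverse)
    then have "K \<subseteq> (\<Union>x\<in>Fm m. ball x e)"
      using Fm(3)[of m] by blast
    then show ?thesis using Fm(1) unfolding D_def by blast
  qed
  obtain M where M: "\<And>x y. x \<in> K \<Longrightarrow> y \<in> K \<Longrightarrow> dist x y \<le> M"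
    using compact_imp_bounded[OF K] unfolding bounded_two_points by blast
  define \<phi> where "\<phi> n x = infdist x (A n)" for n x
  have \<phi>b: "norm (\<phi> n x) \<le> M" if "x \<in> D" for n x
  proof -
    obtain a where a: "a \<in> A n" using Ane by blast
    have "\<phi> n x \<le> dist x a" unfolding \<phi>_def using infdist_le[OF a] .
    also have "\<dots> \<le> M" using M a AK DK that by blast
    finally show ?thesis unfolding \<phi>_def by (simp add: infdist_nonneg)
  qed
  obtain k where k: "strict_mono k" "\<And>x. x \<in> D \<Longrightarrow> \<exists>l. (\<lambda>n. \<phi> (k n) x) \<longlonglongrightarrow> l"
    using function_convergent_subsequence[OF Dc, of \<phi> M] \<phi>b by blast
  define \<psi> where "\<psi> n = \<phi> (k n)" for n
  have lip: "\<bar>\<psi> n x - \<psi> n y\<bar> \<le> dist x y" for n x y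
    unfolding \<psi>_def \<phi>_def by (rule infdist_triangle_abs)
  have \<psi>nn: "\<psi> n x \<ge> 0" for n x unfolding \<psi>_def \<phi>_def by (rule infdist_nonneg)
  have conv: "convergent (\<lambda>n. \<psi> n x)" if x: "x \<in> K" for x
  proof -
    have "Cauchy (\<lambda>n. \<psi> n x)"
    proof (rule metric_CauchyI)
      fix e :: real assume e: "e > 0"
      obtain F where F: "finite F" "F \<subseteq> D" "K \<subseteq> (\<Union>x\<in>F. ball x (e/3))"
        using netD[of "e/3"] e by auto
      then obtain q where q0: "q \<in> F" "x \<in> ball q (e/3)" using x by blast
      then have q: "q \<in> D" "dist q x < e/3" using F(2) by auto
      obtain l where "(\<lambda>n. \<psi> n q) \<longlonglongrightarrow> l" using k(2)[OF q(1)] unfolding \<psi>_def by blast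
      then have "Cauchy (\<lambda>n. \<psi> n q)" by (rule LIMSEQ_imp_Cauchy)
      then obtain N where N: "\<forall>m\<ge>N. \<forall>n\<ge>N. dist (\<psi> m q) (\<psi> n q) < e/3"
        using e metric_CauchyD[of "\<lambda>n. \<psi> n q" "e/3"] by auto
      show "\<exists>N. \<forall>m\<ge>N. \<forall>n\<ge>N. dist (\<psi> m x) (\<psi> n x) < e"
      proof (intro exI allI impI)
        fix m n assume "N \<le> m" "N \<le> n"
        then have "\<bar>\<psi> m q - \<psi> n q\<bar> < e/3" using N by (auto simp: dist_real_def)
        moreover have "\<bar>\<psi> m x - \<psi> m q\<bar> \<le> dist x q" "\<bar>\<psi> n q - \<psi> n x\<bar> \<le> dist q x" using lip by auto
        moreover have "dist x q = dist q x" by (rule dist_commute)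
        ultimately show "dist (\<psi> m x) (\<psi> n x) < e" using q(2) unfolding dist_real_def by (simp only: abs_less_iff abs_le_iff) linarith
      qed
    qed
    then show ?thesis using Cauchy_convergent_iff by blast
  qed
  define g where "g x = lim (\<lambda>n. \<psi> n x)" for x
  have gl: "(\<lambda>n. \<psi> n x) \<longlonglongrightarrow> g x" if "x \<in> K" for x
    using conv[OF that] unfolding g_def by (simp add: convergent_LIMSEQ_iff)
  have glip: "\<bar>g x - g y\<bar> \<le> dist x y" if "x \<in> K" "y \<in> K" for x y
  proof -
    have "(\<lambda>n. \<bar>\<psi> n x - \<psi> n y\<bar>) \<longlonglongrightarrow> \<bar>g x - g y\<bar>"
      using gl that by (intro tendsto_intros)
    then show ?thesis using lip by (intro LIMSEQ_le_const2[of _ _ "dist x y"]) auto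
  qed
  have gnn: "g x \<ge> 0" if "x \<in> K" for x
    using gl[OF that] \<psi>nn by (intro LIMSEQ_le_const[of _ _ 0]) auto
  have unif: "\<forall>\<^sub>F n in sequentially. \<forall>x\<in>K. \<bar>\<psi> n x - g x\<bar> < e" if e: "e > 0" for e
  proof -
    obtain F where F: "finite F" "F \<subseteq> D" "K \<subseteq> (\<Union>x\<in>F. ball x (e/3))"
      using netD[of "e/3"] e by auto
    have "\<forall>q\<in>F. \<forall>\<^sub>F n in sequentially. \<bar>\<psi> n q - g q\<bar> < e/3"
    proof
      fix q assume "q \<in> F"
      then have "q \<in> K" using F DK by blast
      then have "(\<lambda>n. \<psi> n q) \<longlonglongrightarrow> g q" by (rule gl)
      then show "\<forall>\<^sub>F n in sequentially. \<bar>\<psi> n q - g q\<bar> < e/3"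
      proof -
        have "e/3 > 0" using e by simp
        with \<open>(\<lambda>n. \<psi> n q) \<longlonglongrightarrow> g q\<close> have "\<forall>\<^sub>F n in sequentially. dist (\<psi> n q) (g q) < e/3"
          by (rule tendstoD)
        then show ?thesis by (simp add: dist_real_def)
      qed
    qed
    then have "\<forall>\<^sub>F n in sequentially. \<forall>q\<in>F. \<bar>\<psi> n q - g q\<bar> < e/3"
      using F(1) by (simp only: eventually_ball_finite_distrib)
    then show ?thesis
    proof (rule eventually_mono)
      fix n assume H: "\<forall>q\<in>F. \<bar>\<psi> n q - g q\<bar> < e/3"
      show "\<forall>x\<in>K. \<bar>\<psi> n x - g x\<bar> < e"
      proof
        fix x assume x: "x \<in> K"
        then obtain q where q0: "q \<in> F" "x \<in> ball q (e/3)" using F(3) by blast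
        then have q: "q \<in> F" "dist q x < e/3" by auto
        have qK: "q \<in> K" using q F DK by blast
        have h1: "\<bar>\<psi> n x - \<psi> n q\<bar> \<le> dist q x" using lip[of n x q] by (simp add: dist_commute)
        have h2: "\<bar>g q - g x\<bar> \<le> dist q x" using glip qK x by blast
        have h3: "\<bar>\<psi> n q - g q\<bar> < e/3" using H q by blast
        have "\<bar>\<psi> n x - g x\<bar> \<le> \<bar>\<psi> n x - \<psi> n q\<bar> + \<bar>\<psi> n q - g q\<bar> + \<bar>g q - g x\<bar>"
          by (rule order_trans[OF _ add_right_mono[OF abs_triangle_ineq]]) (rule order_trans[OF _ abs_triangle_ineq], simp)
        then show "\<bar>\<psi> n x - g x\<bar> < e" using h1 h2 h3 q(2) by linarith
      qed
    qed
  qed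
  define B where "B = {x\<in>K. g x = 0}"
  have gcont: "continuous_on K g"
    unfolding continuous_on_iff
  proof (intro ballI allI impI)
    fix x and e :: real assume x: "x \<in> K" and e: "0 < e"
    show "\<exists>d>0. \<forall>y\<in>K. dist y x < d \<longrightarrow> dist (g y) (g x) < e"
    proof (intro exI[of _ e] conjI ballI impI)
      show "0 < e" by (rule e)
      fix y assume "y \<in> K" "dist y x < e"
      then show "dist (g y) (g x) < e" using glip[of y x] x unfolding dist_real_def by linarith
    qed
  qed
  have Bc: "compact B"
  proof -
    have "closed (g -` {0} \<inter> K)"
      by (rule closed_vimage_Int[OF closed_singleton gcont compact_imp_closed[OF K]])
    moreover have "B = (g -` {0} \<inter> K) \<inter> K" unfolding B_def by blast
    ultimately show ?thesis using closed_Int_compact K by metis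
  qed
  have near: "\<exists>y\<in>B. dist x y \<le> g x" if x: "x \<in> K" for x
  proof -
    have "\<forall>n. \<exists>a. a \<in> A (k n) \<and> dist x a = \<psi> n x"
    proof
      fix n
      obtain b where "b \<in> A (k n)" "dist x b = infdist x (A (k n))"
        by (rule nearest_point[OF Ac[of "k n"] Ane[of "k n"]])
      then show "\<exists>a. a \<in> A (k n) \<and> dist x a = \<psi> n x" unfolding \<psi>_def \<phi>_def by blast
    qed
    then obtain a where a': "\<forall>n. a n \<in> A (k n) \<and> dist x (a n) = \<psi> n x"
      by (rule choice[THEN exE])
    then have a: "\<And>n. a n \<in> A (k n)" "\<And>n. dist x (a n) = \<psi> n x" by auto
    have aK: "\<forall>n. a n \<in> K" using a AK by blast
    obtain y r where yr: "y \<in> K" "strict_mono r" "(a \<circ> r) \<longlonglongrightarrow> y"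
      by (rule seq_compactE[OF sK aK])
    have l1: "(\<lambda>j. \<psi> (r j) y) \<longlonglongrightarrow> g y"
      using LIMSEQ_subseq_LIMSEQ[OF gl[OF yr(1)] yr(2)] by (simp add: o_def)
    have l2: "(\<lambda>j. dist y (a (r j))) \<longlonglongrightarrow> 0"
      using tendsto_dist[OF tendsto_const yr(3), of y] by (simp add: o_def)
    have le: "\<psi> (r j) y \<le> dist y (a (r j))" for j
      unfolding \<psi>_def \<phi>_def using infdist_le[OF a(1)] .
    have "g y \<le> 0" by (rule LIMSEQ_le[OF l1 l2]) (use le in blast)
    then have yB: "y \<in> B" using gnn[OF yr(1)] yr(1) unfolding B_def by auto
    have l3: "(\<lambda>j. \<psi> (r j) x) \<longlonglongrightarrow> g x"
      using LIMSEQ_subseq_LIMSEQ[OF gl[OF x] yr(2)] by (simp add: o_def)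
    have l4: "(\<lambda>j. dist x (a (r j))) \<longlonglongrightarrow> dist x y"
      using tendsto_dist[OF tendsto_const yr(3), of x] by (simp add: o_def)
    have "(\<lambda>j. dist x (a (r j))) = (\<lambda>j. \<psi> (r j) x)" using a(2) by simp
    then have l5: "(\<lambda>j. \<psi> (r j) x) \<longlonglongrightarrow> dist x y" using l4 by simp
    have "dist x y = g x" by (rule LIMSEQ_unique[OF l5 l3])
    then show ?thesis using yB by (intro bexI[of _ y]) auto
  qed
  have KB: "K \<noteq> {}" using Ane AK by blast
  then have Bne: "B \<noteq> {}" using near by blast
  have lim: "(\<lambda>n. hausdorff_dist (A (k n)) B) \<longlonglongrightarrow> 0"
    unfolding tendsto_iff
  proof (intro allI impI)
    fix e :: real assume e: "e > 0"
    show "\<forall>\<^sub>F n in sequentially. dist (hausdorff_dist (A (k n)) B) 0 < e"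
    proof -
      have "e/2 > 0" using e by simp
      then have ev: "\<forall>\<^sub>F n in sequentially. \<forall>x\<in>K. \<bar>\<psi> n x - g x\<bar> < e/2" by (rule unif)
      show ?thesis using ev
    proof (rule eventually_mono)
      fix n assume H: "\<forall>x\<in>K. \<bar>\<psi> n x - g x\<bar> < e/2"
      have "0 \<le> hausdorff_dist (A (k n)) B \<and> hausdorff_dist (A (k n)) B \<le> e/2"
      proof (rule hausdorff_dist_le[OF Ane Bne])
        fix a assume a: "a \<in> A (k n)"
        then have aK: "a \<in> K" using AK by blast
        have "\<psi> n a = 0" unfolding \<psi>_def \<phi>_def using a by simp
        moreover have "\<bar>\<psi> n a - g a\<bar> < e/2" using H aK by blast
        ultimately have "g a < e/2" by (simp only: abs_less_iff) linarith
        moreover obtain y where y: "y \<in> B" "dist a y \<le> g a" using near[OF aK] by blast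
        ultimately show "infdist a B \<le> e/2" using infdist_le2[OF y(1), of a "e/2"] by linarith
      next
        fix b assume b: "b \<in> B"
        then have "b \<in> K" "g b = 0" unfolding B_def by auto
        moreover have "\<bar>\<psi> n b - g b\<bar> < e/2" using H \<open>b \<in> K\<close> by blast
        ultimately have "\<psi> n b < e/2" by (simp only: abs_less_iff) linarith
        then show "infdist b (A (k n)) \<le> e/2" unfolding \<psi>_def \<phi>_def by simp
      qed
      then show "dist (hausdorff_dist (A (k n)) B) 0 < e" using e by (simp add: dist_real_def)
    qed
    qed
  qed
  show ?thesis using that[OF k(1) Bne Bc lim] .
qed



lemma is_attractorD:
  assumes "is_attractor N g A"
  shows "A \<noteq> {}" "compact A"
proof -
  have h: "A \<noteq> {} \<and> compact A \<and> A = (\<Union>i\<in>{1..N}. g i ` A)"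
    using assms unfolding is_attractor_def .
  from h show "A \<noteq> {}" by (rule conjunct1)
  from h show "compact A" by (rule conjunct1[OF conjunct2])
qed

theorem mainTheorem6:
  fixes f :: "nat \<Rightarrow> real \<Rightarrow> 'a::metric_space \<Rightarrow> 'a" and N :: nat
  assumes proper: "\<And>S::'a set. closed S \<Longrightarrow> bounded S \<Longrightarrow> compact S"
    and complete: "complete (UNIV :: 'a set)"
    and N2: "N \<ge> 2"
    and cont: "\<And>i t. i \<in> {1..N} \<Longrightarrow> t \<in> {0..1} \<Longrightarrow> continuous_on UNIV (f i t)"
    and H2: "\<And>t. t \<in> {0..<1} \<Longrightarrow>
               \<exists>L<1. \<forall>i\<in>{1..N}. \<forall>x y. dist (f i t x) (f i t y) \<le> L * dist x y"
    and unif: "\<And>i t e. i \<in> {1..N} \<Longrightarrow> t \<in> {0..1} \<Longrightarrow> e > 0 \<Longrightarrow>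
               \<exists>\<delta>>0. \<forall>s\<in>{0..1}. \<bar>s - t\<bar> < \<delta> \<longrightarrow> (\<forall>x. dist (f i s x) (f i t x) \<le> e)"
  shows "\<exists>B. upper_transition_attractor N f B"
proof -
  have "\<forall>i\<in>{1..N}. \<exists>\<delta>>0. \<forall>s\<in>{0..1}. \<bar>s - 1\<bar> < \<delta> \<longrightarrow> (\<forall>x. dist (f i s x) (f i 1 x) \<le> 1)"
    using unif[of _ 1 1] by auto
  then obtain d where d: "\<And>i. i \<in> {1..N} \<Longrightarrow> d i > 0"
    "\<And>i s x. i \<in> {1..N} \<Longrightarrow> s \<in> {0..1} \<Longrightarrow> \<bar>s - 1\<bar> < d i \<Longrightarrow> dist (f i s x) (f i 1 x) \<le> 1"
    by metis
  have Nne: "{1..N} \<noteq> {}" using N2 by auto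
  define \<delta> where "\<delta> = Min (d ` {1..N})"
  have \<delta>pos: "\<delta> > 0" unfolding \<delta>_def using d(1) Nne by (subst Min_gr_iff) auto
  have \<delta>le: "i \<in> {1..N} \<Longrightarrow> \<delta> \<le> d i" for i unfolding \<delta>_def by auto
  define t0 where "t0 = max 0 (1 - \<delta>/2)"
  have t0: "t0 \<in> {0..<1}" unfolding t0_def using \<delta>pos by auto
  have close1: "dist (f i s x) (f i 1 x) \<le> 1" if "i \<in> {1..N}" "s \<in> {t0..1}" for i s x
  proof (rule d(2)[OF that(1)])
    show "s \<in> {0..1}" using that t0 by auto
    show "\<bar>s - 1\<bar> < d i" using that \<delta>le[OF that(1)] \<delta>pos unfolding t0_def by auto
  qed
  obtain L0 where L0: "L0 < 1" "\<forall>i\<in>{1..N}. \<forall>x y. dist (f i t0 x) (f i t0 y) \<le> L0 * dist x y"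
    using H2[OF t0] by blast
  define L where "L = max L0 0"
  have L: "L < 1" "0 \<le> L" unfolding L_def using L0 by auto
  have Lip: "dist (f i t0 x) (f i t0 y) \<le> L * dist x y" if "i \<in> {1..N}" for i x y
  proof -
    have "L0 * dist x y \<le> L * dist x y" unfolding L_def by (intro mult_right_mono) auto
    moreover have "dist (f i t0 x) (f i t0 y) \<le> L0 * dist x y" using L0(2) that by blast
    ultimately show ?thesis by linarith
  qed
  define p :: 'a where "p = undefined"
  define D where "D = Max ((\<lambda>i. dist (f i t0 p) p) ` {1..N})"
  have D: "i \<in> {1..N} \<Longrightarrow> dist (f i t0 p) p \<le> D" for i unfolding D_def by auto
  have D0: "D \<ge> 0" using D[of 1] N2 by (meson atLeastAtMost_iff dual_order.trans le_numeral_extra(4) one_le_numeral zero_le_dist)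
  define R where "R = (D + 2) / (1 - L)"
  have R: "L * R + D + 2 = R" unfolding R_def using L by (simp add: field_simps)
  have R0: "R \<ge> 0" unfolding R_def using L D0 by simp
  define K where "K = cball p R"
  have K: "compact K" "K \<noteq> {}" unfolding K_def using proper[OF closed_cball bounded_cball] R0 by auto
  have inv: "f i s ` K \<subseteq> K" if "i \<in> {1..N}" "s \<in> {t0..1}" for i s
  proof
    fix y assume "y \<in> f i s ` K"
    then obtain x where x: "x \<in> K" "y = f i s x" by blast
    have dx: "dist x p \<le> R" using x unfolding K_def by (simp add: dist_commute)
    have "dist (f i s x) p \<le> dist (f i s x) (f i 1 x) + dist (f i 1 x) p" by (rule dist_triangle)
    also have "dist (f i 1 x) p \<le> dist (f i 1 x) (f i t0 x) + dist (f i t0 x) p" by (rule dist_triangle)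
    also have "dist (f i t0 x) p \<le> dist (f i t0 x) (f i t0 p) + dist (f i t0 p) p" by (rule dist_triangle)
    finally have "dist (f i s x) p \<le> dist (f i s x) (f i 1 x) + (dist (f i 1 x) (f i t0 x) + (dist (f i t0 x) (f i t0 p) + dist (f i t0 p) p))"
      by simp
    moreover have "dist (f i s x) (f i 1 x) \<le> 1" by (rule close1[OF that])
    moreover have "dist (f i 1 x) (f i t0 x) \<le> 1" using close1[OF that(1), of t0 x] t0 by (simp add: dist_commute)
    moreover have "dist (f i t0 x) (f i t0 p) \<le> L * R"
      using Lip[OF that(1), of x p] mult_left_mono[OF dx L(2)] by linarith
    moreover have "dist (f i t0 p) p \<le> D" by (rule D[OF that(1)])
    ultimately have "dist (f i s x) p \<le> R" using R by linarith
    then show "y \<in> K" unfolding K_def using x by (simp add: dist_commute)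
  qed
  define tn where "tn n = 1 - (1 - t0) * inverse (real (Suc (Suc n)))" for n
  have tn_in: "tn n \<in> {t0..<1}" for n
  proof -
    have "inverse (real (Suc (Suc n))) \<le> 1" by (simp add: inverse_le_1_iff)
    moreover have "inverse (real (Suc (Suc n))) > 0" by auto
    moreover have "1 - t0 > 0" using t0 by simp
    ultimately have "(1 - t0) * inverse (real (Suc (Suc n))) \<le> 1 - t0"
      "0 < (1 - t0) * inverse (real (Suc (Suc n)))"
      by (simp_all add: mult_left_le)
    then show ?thesis unfolding tn_def atLeastLessThan_iff by linarith
  qed
  have tn_mono: "strict_mono tn"
    unfolding strict_mono_Suc_iff
  proof
    fix n
    have "inverse (real (Suc (Suc (Suc n)))) < inverse (real (Suc (Suc n)))"
      by (rule less_imp_inverse_less) auto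
    then show "tn n < tn (Suc n)" unfolding tn_def using t0 by (simp add: mult_strict_left_mono)
  qed
  have tn_lim: "tn \<longlonglongrightarrow> 1"
  proof -
    have "(\<lambda>n. inverse (real (Suc (Suc n)))) \<longlonglongrightarrow> 0"
      using LIMSEQ_Suc[OF LIMSEQ_inverse_real_of_nat] by simp
    then have "(\<lambda>n. 1 - (1 - t0) * inverse (real (Suc (Suc n)))) \<longlonglongrightarrow> 1 - (1 - t0) * 0"
      by (intro tendsto_intros)
    then show ?thesis unfolding tn_def by simp
  qed
  define A where "A n = attractor N (\<lambda>i. f i (tn n))" for n
  have Aprops: "is_attractor N (\<lambda>i. f i (tn n)) (A n) \<and> A n \<subseteq> K" for n
  proof -
    have tn01: "tn n \<in> {0..<1}" using tn_in[of n] t0 by auto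
    obtain Ln where Ln: "Ln < 1" "\<forall>i\<in>{1..N}. \<forall>x y. dist (f i (tn n) x) (f i (tn n) y) \<le> Ln * dist x y"
      using H2[OF tn01] by blast
    show ?thesis unfolding A_def
    proof (rule attractor_exists[OF K _ _ _ Ln])
      show "1 \<le> N" using N2 by simp
      show "f i (tn n) ` K \<subseteq> K" if "i \<in> {1..N}" for i using inv[OF that] tn_in[of n] by auto
      show "continuous_on UNIV (f i (tn n))" if "i \<in> {1..N}" for i using cont[OF that] tn01 by auto
    qed
  qed
  have Ac: "compact (A n)" "A n \<noteq> {}" "A n \<subseteq> K" for n
  proof -
    have h: "is_attractor N (\<lambda>i. f i (tn n)) (A n)" using Aprops[of n] by (rule conjunct1)
    show "compact (A n)" "A n \<noteq> {}" using is_attractorD[OF h] by auto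
    show "A n \<subseteq> K" using Aprops[of n] by (rule conjunct2)
  qed
  obtain r B where rB: "strict_mono r" "B \<noteq> {}" "compact B"
    "(\<lambda>n. hausdorff_dist (A (r n)) B) \<longlonglongrightarrow> 0"
    by (rule blaschke[OF K(1) Ac(1) Ac(2) Ac(3)])
  have "upper_transition_attractor N f B"
    unfolding upper_transition_attractor_def
  proof (intro conjI exI[of _ "tn \<circ> r"])
    show "B \<noteq> {}" "compact B" using rB by auto
    show "strict_mono (tn \<circ> r)" unfolding strict_mono_def o_def using tn_mono rB(1) by (simp add: strict_monoD)
    show "\<forall>n. (tn \<circ> r) n \<in> {0..<1}"
    proof
      fix n show "(tn \<circ> r) n \<in> {0..<1}" using tn_in[of "r n"] t0 by auto
    qed
    show "(tn \<circ> r) \<longlonglongrightarrow> 1" using LIMSEQ_subseq_LIMSEQ[OF tn_lim rB(1)] .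
    show "(\<lambda>n. hausdorff_dist (attractor N (\<lambda>i. f i ((tn \<circ> r) n))) B) \<longlonglongrightarrow> 0"
      using rB(4) unfolding A_def by (simp add: o_def)
  qed
  then show ?thesis by blast
qed

end
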